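(* Let $Y=\ell_1^N$ (real or complex) and let $m$ be a positive integer. For $j_1,\dots,j_m\in\{1,\dots,N\}$ (not necessarily distinct) define the $m$-homogeneous polynomial $$Q_{j_1,\dots,j_m}(x)=\prod_{k=1}^m e^*_{j_k}(x)+\Big[\sum_{j\in\{j_1,\dots,j_m\}}e^*_j(x)\Big]^m,$$ where the sum runs over the set $\{j_1,\dots,j_m\}$ (each distinct index once). Then $x\in B_Y$ satisfies $|Q_{j_1,\dots,j_m}(x)|=\|Q_{j_1,\dots,j_m}\|$ if and only if $x=\frac{c}{m}\sum_{k=1}^me_{j_k}$ for some scalar $c$ with $|c|=1$. Consequently $Q_{j_1,\dots,j_m}$ strongly attains its norm at $\frac1m\sum_{k=1}^me_{j_k}$.
   Context: $\{e_j\}$ is the canonical basis of $\ell_1^N$ and $\{e_j^*\}$ the coordinate functionals. The norm of a polynomial $P$ is $\|P\|=\sup_{x\in B_Y}|P(x)|$. A nonzero $P$ strongly attains its norm at $x\in B_Y$ if for every sequence $\{x_n\}\subset B_Y$ with $|P(x_n)|\to\|P\|$ there are a scalar $\lambda$ with $|\lambda|=1$ and a subsequence of $\{x_n\}$ converging to $\lambda x$. *)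

theory Defs
  imports "HOL-Analysis.Analysis"
begin

text \<open>The space Y = ell_1^N is modelled as functions from a finite index type 'n
  (with N = CARD('n)) to the scalar field 'a (real or complex).\<close>

definition l1norm :: "('n::finite \<Rightarrow> 'a::real_normed_field) \<Rightarrow> real" where
  "l1norm x = (\<Sum>i\<in>UNIV. norm (x i))"

definition l1ball :: "('n::finite \<Rightarrow> 'a::real_normed_field) set" where
  "l1ball = {x. l1norm x \<le> 1}"

definition unitvec :: "'n::finite \<Rightarrow> 'n \<Rightarrow> 'a::real_normed_field" where
  "unitvec j = (\<lambda>i. if i = j then 1 else 0)"

definition coordf :: "'n::finite \<Rightarrow> ('n \<Rightarrow> 'a::real_normed_field) \<Rightarrow> 'a" where
  "coordf j x = x j"

definition pnorm :: "(('n::finite \<Rightarrow> 'a::real_normed_field) \<Rightarrow> 'a) \<Rightarrow> real" where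
  "pnorm P = (SUP x\<in>l1ball. norm (P x))"

definition strongly_attains :: "(('n::finite \<Rightarrow> 'a::real_normed_field) \<Rightarrow> 'a) \<Rightarrow> ('n \<Rightarrow> 'a) \<Rightarrow> bool" where
  "strongly_attains P x \<longleftrightarrow>
     (\<exists>y\<in>l1ball. P y \<noteq> 0) \<and> x \<in> l1ball \<and>
     (\<forall>xs. (\<forall>n. xs n \<in> l1ball) \<and> (\<lambda>n. norm (P (xs n))) \<longlonglongrightarrow> pnorm P \<longrightarrow>
        (\<exists>c::'a. norm c = 1 \<and> (\<exists>r. strict_mono r \<and>
            (\<lambda>n. l1norm (\<lambda>i. xs (r n) i - c * x i)) \<longlonglongrightarrow> 0)))"

definition Qpoly :: "nat \<Rightarrow> (nat \<Rightarrow> 'n::finite) \<Rightarrow> ('n \<Rightarrow> 'a::real_normed_field) \<Rightarrow> 'a" where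
  "Qpoly m js x = (\<Prod>k=1..m. coordf (js k) x) + (\<Sum>j\<in>js ` {1..m}. coordf j x) ^ m"

end

theory Submission
  imports Defs
begin

lemma exp_strict: fixes x :: real assumes "x \<noteq> 0" shows "1 + x < exp x"
proof (cases "1 + x/2 \<ge> 0")
  case True
  have "(1 + x/2)^2 \<le> exp (x/2) ^ 2"
    using True exp_ge_add_one_self[of "x/2"] by (intro power_mono) auto
  also have "exp (x/2) ^ 2 = exp x" by (simp add: power2_eq_square flip: exp_add)
  finally have "(1+x/2)^2 \<le> exp x" .
  moreover have "1 + x < (1+x/2)^2" using assms by (simp add: power2_eq_square algebra_simps) (metis not_real_square_gt_zero)
  ultimately show ?thesis by linarith
next
  case False
  then have "1 + x < 0" by linarith
  then show ?thesis using exp_gt_zero[of x] by linarith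
qed

lemma lin_exp: fixes y :: real shows "y \<le> exp (y - 1)"
  using exp_ge_add_one_self[of "y-1"] by simp

lemma lin_exp_strict: fixes y :: real assumes "y \<noteq> 1" shows "y < exp (y - 1)"
  using exp_strict[of "y-1"] assms by simp

lemma amgm:
  fixes z :: "'k \<Rightarrow> real"
  assumes fin: "finite K" and z: "\<And>k. k \<in> K \<Longrightarrow> z k \<ge> 0" and s: "(\<Sum>k\<in>K. z k) \<le> 1"
  shows "(\<Prod>k\<in>K. card K * z k) \<le> 1"
    and "(\<Prod>k\<in>K. card K * z k) = 1 \<Longrightarrow> (\<forall>k\<in>K. card K * z k = 1)"
proof -
  let ?m = "real (card K)"
  have "?m * (\<Sum>k\<in>K. z k) \<le> ?m" using s mult_left_le[of "sum z K" ?m] by simp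
  then have E: "exp (?m * (\<Sum>k\<in>K. z k) - ?m) \<le> 1" by simp
  have B: "(\<Prod>k\<in>K. ?m * z k) \<le> exp (\<Sum>k\<in>K. (?m * z k - 1))"
    unfolding exp_sum[OF fin] by (intro prod_mono) (use z lin_exp in auto)
  have S: "(\<Sum>k\<in>K. (?m * z k - 1)) = ?m * (\<Sum>k\<in>K. z k) - ?m"
    by (simp add: sum_subtractf sum_distrib_left)
  show "(\<Prod>k\<in>K. ?m * z k) \<le> 1" using order_trans[OF B[unfolded S] E] .
  assume eq: "(\<Prod>k\<in>K. ?m * z k) = 1"
  show "\<forall>k\<in>K. ?m * z k = 1"
  proof (rule ccontr)
    assume "\<not> ?thesis"
    then obtain k0 where k0: "k0 \<in> K" "?m * z k0 \<noteq> 1" by blast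
    have R: "(\<Prod>k\<in>K-{k0}. ?m * z k) \<le> (\<Prod>k\<in>K-{k0}. exp (?m * z k - 1))"
      by (intro prod_mono) (use z lin_exp in auto)
    have "(\<Prod>k\<in>K. ?m * z k) = ?m * z k0 * (\<Prod>k\<in>K-{k0}. ?m * z k)"
      using fin k0 by (simp add: prod.remove)
    also have "\<dots> \<le> ?m * z k0 * (\<Prod>k\<in>K-{k0}. exp (?m * z k - 1))"
      using R z k0 by (intro mult_left_mono) auto
    also have "\<dots> < exp (?m * z k0 - 1) * (\<Prod>k\<in>K-{k0}. exp (?m * z k - 1))"
      using lin_exp_strict[OF k0(2)] by (intro mult_strict_right_mono) (auto intro: prod_pos)
    also have "\<dots> = (\<Prod>k\<in>K. exp (?m * z k - 1))"
      using fin k0 by (simp add: prod.remove)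
    also have "\<dots> = exp (\<Sum>k\<in>K. (?m * z k - 1))" using fin by (simp add: exp_sum)
    finally have "(\<Prod>k\<in>K. ?m * z k) < exp (?m * (\<Sum>k\<in>K. z k) - ?m)" unfolding S .
    then show False using eq E by linarith
  qed
qed



definition acnt :: "nat \<Rightarrow> (nat \<Rightarrow> 'n) \<Rightarrow> 'n \<Rightarrow> nat" where
  "acnt m js j = card {k\<in>{1..m}. js k = j}"

lemma unitvec_sum: "(\<Sum>k=1..m. unitvec (js k) i :: 'a::real_normed_field) = of_nat (acnt m js i)"
proof -
  have "(\<Sum>k=1..m. unitvec (js k) i :: 'a) = (\<Sum>k=1..m. of_bool (js k = i))"
    unfolding unitvec_def by (intro sum.cong refl) auto
  also have "\<dots> = of_nat (card ({1..m} \<inter> {k. js k = i}))" by simp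
  also have "{1..m} \<inter> {k. js k = i} = {k\<in>{1..m}. js k = i}" by auto
  finally show ?thesis unfolding acnt_def .
qed

lemma acnt_pos: "k \<in> {1..m} \<Longrightarrow> acnt m js (js k) \<ge> 1"
proof -
  assume k: "k \<in> {1..m}"
  have "card {k'\<in>{1..m}. js k' = js k} \<noteq> 0"
    using k by (subst card_0_eq) auto
  then show ?thesis unfolding acnt_def by linarith
qed

lemma acnt_zero: "j \<notin> js ` {1..m} \<Longrightarrow> acnt m js j = 0"
  unfolding acnt_def by auto

lemma group_sum:
  fixes g :: "'n \<Rightarrow> 'b::semiring_1"
  shows "(\<Sum>k=1..m. g (js k)) = (\<Sum>j\<in>js ` {1..m}. of_nat (acnt m js j) * g j)"
proof -
  have "(\<Sum>k=1..m. g (js k)) = (\<Sum>j\<in>js ` {1..m}. \<Sum>k\<in>{k\<in>{1..m}. js k = j}. g (js k))"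
    by (rule sum.image_gen) (rule finite_atLeastAtMost)
  also have "\<dots> = (\<Sum>j\<in>js ` {1..m}. of_nat (acnt m js j) * g j)"
    unfolding acnt_def by (intro sum.cong refl) (simp add: sum_constant)
  finally show ?thesis .
qed

lemma acnt_sum_S: "(\<Sum>j\<in>js ` {1..m}. acnt m js j) = m"
  using group_sum[where g="\<lambda>_. 1::nat" and m=m and js=js] by simp

lemma acnt_sum_UNIV: "(\<Sum>j\<in>UNIV. acnt m js (j::'n::finite)) = m"
proof -
  have "(\<Sum>j\<in>UNIV. acnt m js j) = (\<Sum>j\<in>js ` {1..m}. acnt m js j)"
    by (rule sum.mono_neutral_right) (auto simp: acnt_zero)
  also have "\<dots> = m" by (rule acnt_sum_S)
  finally show ?thesis .
qed

lemma group_div: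
  fixes t :: "'n \<Rightarrow> real"
  shows "(\<Sum>k=1..m. t (js k) / acnt m js (js k)) = (\<Sum>j\<in>js ` {1..m}. t j)"
proof -
  have "(\<Sum>k=1..m. t (js k) / acnt m js (js k)) = (\<Sum>j\<in>js ` {1..m}. of_nat (acnt m js j) * (t j / acnt m js j))"
    by (rule group_sum)
  also have "\<dots> = (\<Sum>j\<in>js ` {1..m}. t j)"
  proof (intro sum.cong refl)
    fix j assume "j \<in> js ` {1..m}"
    then obtain k where "k \<in> {1..m}" "j = js k" by blast
    then have "acnt m js j \<ge> 1" using acnt_pos by blast
    then show "of_nat (acnt m js j) * (t j / acnt m js j) = t j" by simp
  qed
  finally show ?thesis .
qed



definition P0 :: "nat \<Rightarrow> (nat \<Rightarrow> 'n) \<Rightarrow> real" where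
  "P0 m js = (\<Prod>k=1..m. real (acnt m js (js k)) / real m)"

lemma P0_pos: "m \<ge> 1 \<Longrightarrow> P0 m js > 0"
proof -
  assume m: "m \<ge> 1"
  show ?thesis unfolding P0_def
  proof (intro prod_pos)
    fix k assume "k \<in> {1..m}"
    then have "acnt m js (js k) \<ge> 1" by (rule acnt_pos)
    then show "0 < real (acnt m js (js k)) / real m" using m by simp
  qed
qed

lemma prod_bound:
  fixes t :: "'n \<Rightarrow> real"
  assumes m: "m \<ge> 1" and t: "\<And>j. t j \<ge> 0" and s: "(\<Sum>j\<in>js ` {1..m}. t j) \<le> 1"
  shows "(\<Prod>k=1..m. t (js k)) \<le> P0 m js"
    and "(\<Prod>k=1..m. t (js k)) = P0 m js \<Longrightarrow> (\<forall>k\<in>{1..m}. t (js k) = acnt m js (js k) / m)"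
proof -
  define z where "z k = t (js k) / acnt m js (js k)" for k
  have z0: "\<And>k. k \<in> {1..m} \<Longrightarrow> z k \<ge> 0" unfolding z_def using t by simp
  have zs: "(\<Sum>k\<in>{1..m}. z k) \<le> 1" unfolding z_def group_div using s .
  have cm: "card {1..m} = m" by simp
  note A = amgm[OF finite_atLeastAtMost z0 zs, unfolded cm]
  have eq: "(\<Prod>k=1..m. t (js k)) = P0 m js * (\<Prod>k=1..m. real m * z k)"
  proof -
    have "(\<Prod>k=1..m. t (js k)) = (\<Prod>k=1..m. (real (acnt m js (js k)) / real m) * (real m * z k))"
    proof (intro prod.cong refl)
      fix k assume "k \<in> {1..m}"
      then have "acnt m js (js k) \<ge> 1" by (rule acnt_pos)
      then show "t (js k) = real (acnt m js (js k)) / real m * (real m * z k)"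
        using m unfolding z_def by simp
    qed
    then show ?thesis unfolding P0_def by (simp only: prod.distrib)
  qed
  have pp: "P0 m js > 0" using P0_pos[OF m] .
  show "(\<Prod>k=1..m. t (js k)) \<le> P0 m js"
    unfolding eq using A(1) pp by (simp add: mult_left_le)
  assume "(\<Prod>k=1..m. t (js k)) = P0 m js"
  then have "(\<Prod>k=1..m. real m * z k) = 1" unfolding eq using pp by simp
  then have "\<forall>k\<in>{1..m}. real m * z k = 1" using A(2) by blast
  then show "\<forall>k\<in>{1..m}. t (js k) = acnt m js (js k) / m"
  proof (intro ballI)
    fix k assume k: "k \<in> {1..m}" and "\<forall>k\<in>{1..m}. real m * z k = 1"
    then have e: "real m * (t (js k) / acnt m js (js k)) = 1" unfolding z_def by blast
    have "acnt m js (js k) \<ge> 1" using k by (rule acnt_pos)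
    then show "t (js k) = acnt m js (js k) / m" using e m by (simp add: field_simps)
  qed
qed

lemma Q_bound:
  fixes x :: "'n::finite \<Rightarrow> 'a::real_normed_field"
  assumes m: "m \<ge> 1" and x: "x \<in> l1ball"
  shows "norm (Qpoly m js x) \<le> 1 + P0 m js"
proof -
  let ?S = "js ` {1..m}"
  have l: "(\<Sum>i\<in>UNIV. norm (x i)) \<le> 1" using x unfolding l1ball_def l1norm_def by simp
  have s1: "(\<Sum>j\<in>?S. norm (x j)) \<le> 1"
    using l sum_mono2[of UNIV ?S "\<lambda>i. norm (x i)"] by auto
  have "norm (Qpoly m js x) \<le> norm (\<Prod>k=1..m. coordf (js k) x) + norm ((\<Sum>j\<in>?S. coordf j x) ^ m)"
    unfolding Qpoly_def by (rule norm_triangle_ineq)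
  also have "norm (\<Prod>k=1..m. coordf (js k) x) = (\<Prod>k=1..m. norm (x (js k)))"
    by (simp add: coordf_def prod_norm)
  also have "\<dots> \<le> P0 m js" by (rule prod_bound(1)[OF m _ s1]) simp
  also have "norm ((\<Sum>j\<in>?S. coordf j x) ^ m) = norm (\<Sum>j\<in>?S. x j) ^ m"
    by (simp add: coordf_def norm_power)
  also have "\<dots> \<le> 1"
    by (intro power_le_one) (use norm_sum[of x ?S] s1 in auto)
  finally show ?thesis by simp
qed



lemma x0_eq:
  "(\<lambda>i. (c / of_nat m) * (\<Sum>k=1..m. unitvec (js k) i)) = (\<lambda>i. (c / of_nat m) * of_nat (acnt m js i) :: 'a::real_normed_field)"
  unfolding unitvec_sum by (rule refl)

lemma value_ball:
  fixes c :: "'a::real_normed_field"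
  assumes m: "m \<ge> 1" and c: "norm c = 1"
  shows "(\<lambda>i. (c / of_nat m) * of_nat (acnt m js i)) \<in> (l1ball :: ('n::finite \<Rightarrow> 'a) set)"
proof -
  have "l1norm (\<lambda>i::'n. (c / of_nat m) * of_nat (acnt m js i)) = (\<Sum>i\<in>UNIV. real (acnt m js i) / real m)"
    unfolding l1norm_def using c by (intro sum.cong refl) (simp add: norm_mult norm_divide)
  also have "\<dots> = real (\<Sum>i\<in>UNIV. acnt m js i) / real m" by (simp add: sum_divide_distrib)
  also have "\<dots> = 1" using m by (simp add: acnt_sum_UNIV)
  finally show ?thesis unfolding l1ball_def by simp
qed

lemma value_Q:
  fixes c :: "'a::real_normed_field"
  assumes m: "m \<ge> 1" and c: "norm c = 1"
  shows "Qpoly m js (\<lambda>i::'n::finite. (c / of_nat m) * of_nat (acnt m js i)) = c ^ m * of_real (1 + P0 m js)"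
proof -
  have p: "(\<Prod>k=1..m. (c / of_nat m) * of_nat (acnt m js (js k))) = c ^ m * of_real (P0 m js)"
  proof -
    have "(\<Prod>k=1..m. (c / of_nat m) * of_nat (acnt m js (js k))) = (\<Prod>k=1..m. c * of_real (real (acnt m js (js k)) / real m))"
      by (intro prod.cong refl) (simp add: field_simps)
    also have "\<dots> = c ^ m * of_real (P0 m js)"
      unfolding P0_def prod.distrib of_real_prod by simp
    finally show ?thesis .
  qed
  have s: "(\<Sum>j\<in>js ` {1..m}. (c / of_nat m) * of_nat (acnt m js j)) = c"
  proof -
    have "(\<Sum>j\<in>js ` {1..m}. (c / of_nat m) * of_nat (acnt m js j)) = (c / of_nat m) * of_nat (\<Sum>j\<in>js ` {1..m}. acnt m js j)"
      by (simp add: sum_distrib_left)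
    also have "\<dots> = c" unfolding acnt_sum_S using m by simp
    finally show ?thesis .
  qed
  show ?thesis unfolding Qpoly_def coordf_def p s by (simp add: algebra_simps)
qed

lemma value_norm:
  fixes c :: "'a::real_normed_field"
  assumes m: "m \<ge> 1" and c: "norm c = 1"
  shows "norm (Qpoly m js (\<lambda>i::'n::finite. (c / of_nat m) * of_nat (acnt m js i))) = 1 + P0 m js"
  unfolding value_Q[OF m c] norm_mult norm_power norm_of_real using P0_pos[OF m, of js] c by simp



lemma Q_eq:
  fixes x :: "'n::finite \<Rightarrow> 'a::{real_normed_field, real_inner}"
  assumes m: "m \<ge> 1" and x: "x \<in> l1ball" and q: "norm (Qpoly m js x) = 1 + P0 m js"
  shows "\<exists>c. norm c = 1 \<and> x = (\<lambda>i. (c / of_nat m) * of_nat (acnt m js i))"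
proof -
  let ?S = "js ` {1..m}"
  define t where "t i = norm (x i)" for i
  define s where "s = (\<Sum>j\<in>?S. x j)"
  have t0: "\<And>i. t i \<ge> 0" unfolding t_def by simp
  have l: "(\<Sum>i\<in>UNIV. t i) \<le> 1" using x unfolding l1ball_def l1norm_def t_def by simp
  have s1: "(\<Sum>j\<in>?S. t j) \<le> 1"
    using l sum_mono2[of UNIV ?S t] t0 by auto
  have ns: "norm s \<le> (\<Sum>j\<in>?S. t j)" unfolding s_def t_def by (rule norm_sum)
  have "norm (Qpoly m js x) \<le> norm (\<Prod>k=1..m. coordf (js k) x) + norm ((\<Sum>j\<in>?S. coordf j x) ^ m)"
    unfolding Qpoly_def by (rule norm_triangle_ineq)
  also have "norm (\<Prod>k=1..m. coordf (js k) x) = (\<Prod>k=1..m. t (js k))"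
    by (simp add: coordf_def prod_norm t_def)
  also have "norm ((\<Sum>j\<in>?S. coordf j x) ^ m) = norm s ^ m"
    by (simp add: coordf_def norm_power s_def)
  finally have qq: "1 + P0 m js \<le> (\<Prod>k=1..m. t (js k)) + norm s ^ m" using q by simp
  have pb: "(\<Prod>k=1..m. t (js k)) \<le> P0 m js" by (rule prod_bound(1)[OF m t0 s1])
  have ns1: "norm s \<le> 1" using ns s1 by simp
  have "norm s ^ m \<le> norm s ^ 1" by (rule power_decreasing) (use m ns1 in auto)
  moreover have "norm s ^ m \<le> 1" using ns1 by (simp add: power_le_one)
  ultimately have pe: "(\<Prod>k=1..m. t (js k)) = P0 m js" and nsone: "norm s = 1"
    using qq pb ns1 by auto
  have sig: "(\<Sum>j\<in>?S. t j) = 1" using nsone ns s1 by simp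
  have tk: "\<forall>k\<in>{1..m}. t (js k) = acnt m js (js k) / m"
    using prod_bound(2)[OF m t0 s1 pe] .
  have out: "x i = 0" if i: "i \<notin> ?S" for i
  proof -
    have "(\<Sum>i\<in>UNIV. t i) = (\<Sum>j\<in>?S. t j) + (\<Sum>j\<in>UNIV - ?S. t j)"
      using sum.subset_diff[of ?S UNIV t] by simp
    then have "(\<Sum>j\<in>UNIV - ?S. t j) \<le> 0" using l sig by simp
    then have "(\<Sum>j\<in>UNIV - ?S. t j) = 0" using t0 by (meson order_antisym sum_nonneg)
    then have "t i = 0" using i t0 by (simp add: sum_nonneg_eq_0_iff)
    then show ?thesis unfolding t_def by simp
  qed
  have cs: "inner s (x j) \<le> t j" for j
    using norm_cauchy_schwarz[of s "x j"] nsone unfolding t_def by simp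
  have "(\<Sum>j\<in>?S. inner s (x j)) = inner s s" unfolding s_def by (simp add: inner_sum_right)
  also have "\<dots> = 1" using nsone by (simp flip: power2_norm_eq_inner)
  finally have si: "(\<Sum>j\<in>?S. inner s (x j)) = 1" .
  have "(\<Sum>j\<in>?S. t j - inner s (x j)) = 0" using si sig by (simp add: sum_subtractf)
  then have ie: "\<forall>j\<in>?S. t j - inner s (x j) = 0"
  proof -
    have fS: "finite ?S" by simp
    have "\<forall>j\<in>?S. 0 \<le> t j - inner s (x j)" using cs by simp
    with sum_nonneg_eq_0_iff[OF fS, of "\<lambda>j. t j - inner s (x j)"] \<open>(\<Sum>j\<in>?S. t j - inner s (x j)) = 0\<close>
    show ?thesis by blast
  qed
  have inS: "x j = of_real (t j) * s" if j: "j \<in> ?S" for j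
  proof -
    have e: "inner s (x j) = t j" using ie j by auto
    have xx: "inner (x j) (x j) = (t j)^2" unfolding t_def by (simp add: power2_norm_eq_inner)
    have ss: "inner s s = 1" using nsone by (simp flip: power2_norm_eq_inner)
    have xs: "inner (x j) s = t j" using e by (simp add: inner_commute)
    have "(norm (x j - t j *\<^sub>R s))^2 = inner (x j - t j *\<^sub>R s) (x j - t j *\<^sub>R s)"
      by (rule power2_norm_eq_inner)
    also have "\<dots> = inner (x j) (x j) - t j * inner (x j) s - t j * inner s (x j) + t j * t j * inner s s"
      by (simp only: inner_diff_left inner_diff_right inner_scaleR_left inner_scaleR_right) (simp add: algebra_simps)
    also have "\<dots> = 0" unfolding xx ss xs e by (simp add: power2_eq_square)
    finally have "x j - t j *\<^sub>R s = 0" by simp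
    then show ?thesis by (simp add: scaleR_conv_of_real)
  qed
  show ?thesis
  proof (intro exI conjI)
    show "norm s = 1" by (rule nsone)
    show "x = (\<lambda>i. (s / of_nat m) * of_nat (acnt m js i))"
    proof
      fix i show "x i = (s / of_nat m) * of_nat (acnt m js i)"
      proof (cases "i \<in> ?S")
        case True
        then obtain k where k: "k \<in> {1..m}" "i = js k" by blast
        have "t i = acnt m js i / m" using tk k by auto
        then show ?thesis using inS[OF True] by (simp add: field_simps)
      next
        case False
        then show ?thesis using out[OF False] acnt_zero[OF False] by simp
      qed
    qed
  qed
qed



lemma coord_tendsto:
  fixes X :: "nat \<Rightarrow> 'n::finite \<Rightarrow> 'a::metric_space"
  assumes "X \<longlonglongrightarrow> l" shows "(\<lambda>n. X n i) \<longlonglongrightarrow> l i"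
  using continuous_on_tendsto_compose[OF continuous_on_product_coordinates[of i] assms] by simp

lemma ball_compact: "compact (PiE UNIV (\<lambda>_::'n. cball (0::'a::{heine_borel,real_normed_vector}) 1))"
proof -
  have "compactin (product_topology (\<lambda>_::'n. euclidean) UNIV) (PiE UNIV (\<lambda>_::'n. cball (0::'a) 1))"
    unfolding compactin_PiE by simp
  then show ?thesis unfolding euclidean_product_topology by simp
qed

lemma pnorm_val:
  fixes js :: "nat \<Rightarrow> 'n::finite"
  assumes m: "m \<ge> 1"
  shows "pnorm (Qpoly m js :: ('n \<Rightarrow> 'a::real_normed_field) \<Rightarrow> 'a) = 1 + P0 m js"
  unfolding pnorm_def
proof (rule cSup_eq_maximum)
  let ?x = "(\<lambda>i::'n. ((1::'a) / of_nat m) * of_nat (acnt m js i))"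
  show "1 + P0 m js \<in> (\<lambda>x. norm (Qpoly m js x :: 'a)) ` l1ball"
    using value_ball[OF m, of "1::'a" js] value_norm[OF m, of "1::'a" js] by (auto intro!: image_eqI[of _ _ ?x])
  show "\<And>y. y \<in> (\<lambda>x. norm (Qpoly m js x :: 'a)) ` l1ball \<Longrightarrow> y \<le> 1 + P0 m js"
    using Q_bound[OF m] by blast
qed

lemma main_gen:
  fixes m :: nat and js :: "nat \<Rightarrow> 'n::finite"
  assumes m: "m \<ge> 1"
  shows "(\<forall>x::'n \<Rightarrow> 'a::{real_normed_field, euclidean_space}. x \<in> l1ball \<longrightarrow>
            (norm (Qpoly m js x) = pnorm (Qpoly m js) \<longleftrightarrow>
             (\<exists>c::'a. norm c = 1 \<and> x = (\<lambda>i. (c / of_nat m) * (\<Sum>k=1..m. unitvec (js k) i)))))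
       \<and> strongly_attains (Qpoly m js :: ('n \<Rightarrow> 'a) \<Rightarrow> 'a)
            (\<lambda>i. (1 / of_nat m) * (\<Sum>k=1..m. unitvec (js k) i))"
proof (intro conjI allI impI)
  have pn: "pnorm (Qpoly m js :: ('n \<Rightarrow> 'a) \<Rightarrow> 'a) = 1 + P0 m js" by (rule pnorm_val[OF m])
  fix x :: "'n \<Rightarrow> 'a" assume x: "x \<in> l1ball"
  show "(norm (Qpoly m js x) = pnorm (Qpoly m js) \<longleftrightarrow>
             (\<exists>c::'a. norm c = 1 \<and> x = (\<lambda>i. (c / of_nat m) * (\<Sum>k=1..m. unitvec (js k) i))))"
  proof -
    have "norm (Qpoly m js x) = pnorm (Qpoly m js) \<longleftrightarrow> norm (Qpoly m js x) = 1 + P0 m js"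
      by (simp add: pnorm_val[OF m])
    also have "\<dots> \<longleftrightarrow> (\<exists>c::'a. norm c = 1 \<and> x = (\<lambda>i. (c / of_nat m) * of_nat (acnt m js i)))"
      using Q_eq[OF m x] value_norm[OF m] by blast
    finally show ?thesis unfolding x0_eq .
  qed
next
  have pn: "pnorm (Qpoly m js :: ('n \<Rightarrow> 'a) \<Rightarrow> 'a) = 1 + P0 m js" by (rule pnorm_val[OF m])
  let ?x0 = "(\<lambda>i::'n. ((1::'a) / of_nat m) * (\<Sum>k=1..m. unitvec (js k) i))"
  have x0: "?x0 = (\<lambda>i. ((1::'a) / of_nat m) * of_nat (acnt m js i))" by (rule x0_eq)
  have x0b: "?x0 \<in> l1ball" unfolding x0 by (rule value_ball[OF m]) simp
  have x0n: "norm (Qpoly m js ?x0) = 1 + P0 m js" unfolding x0 by (rule value_norm[OF m]) simp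
  show "strongly_attains (Qpoly m js :: ('n \<Rightarrow> 'a) \<Rightarrow> 'a) ?x0"
    unfolding strongly_attains_def
  proof (intro conjI allI impI)
    show "\<exists>y\<in>l1ball. Qpoly m js y \<noteq> (0::'a)"
      using x0b x0n P0_pos[OF m, of js] by (intro bexI[of _ ?x0]) auto
    show "?x0 \<in> l1ball" by (rule x0b)
    fix xs :: "nat \<Rightarrow> 'n \<Rightarrow> 'a"
    assume as: "(\<forall>n. xs n \<in> l1ball) \<and> (\<lambda>n. norm (Qpoly m js (xs n))) \<longlonglongrightarrow> pnorm (Qpoly m js)"
    then have xb: "\<And>n. xs n \<in> l1ball" by auto
    have qlim: "(\<lambda>n. norm (Qpoly m js (xs n))) \<longlonglongrightarrow> 1 + P0 m js"
      using as by (simp add: pnorm_val[OF m])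
    have inK: "xs n \<in> PiE UNIV (\<lambda>_::'n. cball (0::'a) 1)" for n
    proof -
      have "norm (xs n i) \<le> 1" for i
      proof -
        have "norm (xs n i) \<le> (\<Sum>i\<in>UNIV. norm (xs n i))" by (rule member_le_sum) auto
        then show ?thesis using xb[of n] unfolding l1ball_def l1norm_def by simp
      qed
      then show ?thesis by (auto simp: PiE_def extensional_def)
    qed
    obtain l r where lK: "l \<in> PiE UNIV (\<lambda>_::'n. cball (0::'a) 1)" and r: "strict_mono r"
      and lim: "(xs \<circ> r) \<longlonglongrightarrow> l"
      using compact_imp_seq_compact[OF ball_compact] inK unfolding seq_compact_def by metis
    have ci: "(\<lambda>n. xs (r n) i) \<longlonglongrightarrow> l i" for i
      using coord_tendsto[OF lim, of i] by (simp add: o_def)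
    have "(\<lambda>n. l1norm (xs (r n))) \<longlonglongrightarrow> l1norm l"
      unfolding l1norm_def by (intro tendsto_intros ci)
    then have lb: "l \<in> l1ball"
      unfolding l1ball_def using xb by (auto intro!: LIMSEQ_le_const2 simp: l1ball_def)
    have "(\<lambda>n. norm (Qpoly m js (xs (r n)))) \<longlonglongrightarrow> norm (Qpoly m js l)"
      unfolding Qpoly_def coordf_def by (intro tendsto_intros ci)
    moreover have "(\<lambda>n. norm (Qpoly m js (xs (r n)))) \<longlonglongrightarrow> 1 + P0 m js"
      using LIMSEQ_subseq_LIMSEQ[OF qlim r] by (simp add: o_def)
    ultimately have "norm (Qpoly m js l) = 1 + P0 m js" by (rule LIMSEQ_unique)
    then obtain c :: 'a where c: "norm c = 1" and lc: "l = (\<lambda>i. (c / of_nat m) * of_nat (acnt m js i))"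
      using Q_eq[OF m lb] by blast
    have lc': "l i = c * ?x0 i" for i unfolding lc unitvec_sum by simp
    show "\<exists>c::'a. norm c = 1 \<and> (\<exists>r. strict_mono r \<and>
            (\<lambda>n. l1norm (\<lambda>i. xs (r n) i - c * ?x0 i)) \<longlonglongrightarrow> 0)"
    proof (intro exI conjI)
      show "norm c = 1" by (rule c)
      show "strict_mono r" by (rule r)
      have "(\<lambda>n. l1norm (\<lambda>i. xs (r n) i - l i)) \<longlonglongrightarrow> l1norm (\<lambda>i. l i - l i)"
        unfolding l1norm_def by (intro tendsto_intros ci)
      then show "(\<lambda>n. l1norm (\<lambda>i. xs (r n) i - c * ?x0 i)) \<longlonglongrightarrow> 0"
        unfolding lc'[symmetric] by (simp add: l1norm_def)
    qed
  qed
qed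

theorem lemma4p4:
  fixes m :: nat and js :: "nat \<Rightarrow> 'n::finite"
  assumes "m \<ge> 1"
  shows "(\<forall>x::'n \<Rightarrow> real. x \<in> l1ball \<longrightarrow>
            (norm (Qpoly m js x) = pnorm (Qpoly m js) \<longleftrightarrow>
             (\<exists>c::real. norm c = 1 \<and> x = (\<lambda>i. (c / of_nat m) * (\<Sum>k=1..m. unitvec (js k) i)))))
       \<and> strongly_attains (Qpoly m js :: ('n \<Rightarrow> real) \<Rightarrow> real)
            (\<lambda>i. (1 / of_nat m) * (\<Sum>k=1..m. unitvec (js k) i))
       \<and> (\<forall>x::'n \<Rightarrow> complex. x \<in> l1ball \<longrightarrow>
            (norm (Qpoly m js x) = pnorm (Qpoly m js) \<longleftrightarrow>
             (\<exists>c::complex. norm c = 1 \<and> x = (\<lambda>i. (c / of_nat m) * (\<Sum>k=1..m. unitvec (js k) i)))))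
       \<and> strongly_attains (Qpoly m js :: ('n \<Rightarrow> complex) \<Rightarrow> complex)
            (\<lambda>i. (1 / of_nat m) * (\<Sum>k=1..m. unitvec (js k) i))"
  using main_gen[OF assms, where 'a=real] main_gen[OF assms, where 'a=complex] by blast

end
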